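(* Let $n$ be a positive integer and, for $k\in\{0,\dots,n-1\}$, let \[ b_k=(-1)^{n-k}\frac{n!}{k!}\binom{2n-k-1}{n-1},\qquad \beta_k=(-1)^{n-1}\frac{(2n-k-1)!}{k!\,(n-k-1)!}. \] Let $\widetilde\Delta(z)=z^n+\sum_{k=0}^{n-1}b_kz^k+e^{-z}\sum_{k=0}^{n-1}\beta_kz^k$. Then, for every $z\in\mathbb C$, \[ \widetilde\Delta(z)=\frac{z^{2n}}{(n-1)!}\int_0^1t^{n-1}(1-t)^ne^{-zt}\,dt. \] *)

theory Defs
  imports "HOL-Analysis.Analysis"
begin

definition b_coef :: "nat \<Rightarrow> nat \<Rightarrow> complex" where
  "b_coef n k = (-1) ^ (n - k) * of_real (fact n / fact k) * of_nat ((2*n - k - 1) choose (n - 1))"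

definition beta_coef :: "nat \<Rightarrow> nat \<Rightarrow> complex" where
  "beta_coef n k = (-1) ^ (n - 1) * of_real (fact (2*n - k - 1) / (fact k * fact (n - k - 1)))"

definition Delta_tilde :: "nat \<Rightarrow> complex \<Rightarrow> complex" where
  "Delta_tilde n z = z ^ n + (\<Sum>k<n. b_coef n k * z ^ k)
      + exp (- z) * (\<Sum>k<n. beta_coef n k * z ^ k)"

end

theory Submission imports Defs "HOL-Computational_Algebra.Polynomial" begin

lemma telescope:
  fixes z :: complex
  shows "(\<Sum>j<m. z^(m-j) * a j) - (\<Sum>j<m. z^(m-1-j) * a (Suc j)) = z^m * a 0 - a m"
proof (induction m)
  case 0 then show ?case by simp
next
  case (Suc m)
  have e1: "(\<Sum>j<Suc m. z^(Suc m-j) * a j) = z * (\<Sum>j<m. z^(m-j) * a j) + z * a m"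
  proof -
    have "(\<Sum>j<m. z^(Suc m-j) * a j) = (\<Sum>j<m. z * (z^(m-j) * a j))"
      by (rule sum.cong) (auto simp: Suc_diff_le)
    then show ?thesis by (simp add: sum_distrib_left)
  qed
  have e2: "(\<Sum>j<Suc m. z^(Suc m-1-j) * a (Suc j)) = z * (\<Sum>j<m. z^(m-1-j) * a (Suc j)) + a (Suc m)"
  proof -
    have "(\<Sum>j<m. z^(m-j) * a (Suc j)) = (\<Sum>j<m. z * (z^(m-1-j) * a (Suc j)))"
      by (rule sum.cong) (auto simp: Suc_diff_Suc simp flip: power_Suc)
    then show ?thesis by (simp add: sum_distrib_left)
  qed
  have "z * ((\<Sum>j<m. z^(m-j) * a j) - (\<Sum>j<m. z^(m-1-j) * a (Suc j))) = z * (z^m * a 0 - a m)"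
    using Suc.IH by simp
  then show ?case unfolding e1 e2 by (simp add: algebra_simps)
qed

lemma deriv_F:
  fixes z :: complex and D :: "nat \<Rightarrow> complex poly"
  shows "((\<lambda>w. - (exp (-z*w) * (\<Sum>j<m. z^(m-1-j) * poly (D j) w))) has_field_derivative
     (z * exp (-z*w) * (\<Sum>j<m. z^(m-1-j) * poly (D j) w) - exp (-z*w) * (\<Sum>j<m. z^(m-1-j) * poly (pderiv (D j)) w))) (at w)"
  by (auto intro!: derivative_eq_intros simp: algebra_simps)

lemma poly_exp_integral:
  fixes z :: complex and p :: "complex poly"
  assumes "degree p < m"
  defines "G \<equiv> \<lambda>w. (\<Sum>j<m. z^(m-1-j) * poly ((pderiv^^j) p) w)"
  shows "((\<lambda>t. z^m * (poly p (of_real t) * exp (-z * of_real t))) has_integral (G 0 - exp (-z) * G 1)) {0..1}"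
proof -
  define Fc where "Fc = (\<lambda>w. - (exp (-z*w) * G w))"
  have pm: "(pderiv^^m) p = 0"
  proof -
    obtain k where k: "m = Suc k" using assms(1) by (cases m) auto
    have "degree ((pderiv^^k) p) = 0" using assms(1) k by (simp add: degree_higher_pderiv)
    then show ?thesis using k by (simp add: pderiv_eq_0_iff)
  qed
  have zG: "z * G w = (\<Sum>j<m. z^(m-j) * poly ((pderiv^^j) p) w)" for w
    unfolding G_def sum_distrib_left
    by (rule sum.cong) (auto simp: Suc_diff_Suc simp flip: power_Suc mult.assoc)
  have der: "(Fc has_field_derivative z^m * (poly p w * exp (-z * w))) (at w)" for w
  proof -
    have "(Fc has_field_derivative
     (z * exp (-z*w) * G w - exp (-z*w) * (\<Sum>j<m. z^(m-1-j) * poly (pderiv ((pderiv^^j) p)) w))) (at w)"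
      unfolding Fc_def G_def by (rule deriv_F)
    also have "z * exp (-z*w) * G w - exp (-z*w) * (\<Sum>j<m. z^(m-1-j) * poly (pderiv ((pderiv^^j) p)) w)
       = exp (-z*w) * (z * G w - (\<Sum>j<m. z^(m-1-j) * poly ((pderiv^^(Suc j)) p) w))"
      by (simp add: algebra_simps)
    also have "\<dots> = exp (-z*w) * (z^m * poly p w - poly ((pderiv^^m) p) w)"
      unfolding zG using telescope[of z m "\<lambda>j. poly ((pderiv^^j) p) w"] by simp
    also have "\<dots> = z^m * (poly p w * exp (-z * w))" using pm by simp
    finally show ?thesis .
  qed
  have "((\<lambda>t. z^m * (poly p (of_real t) * exp (-z * of_real t))) has_integral
      ((\<lambda>t. Fc (of_real t)) 1 - (\<lambda>t. Fc (of_real t)) 0)) {0..1}"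
    by (rule fundamental_theorem_of_calculus) (use der in \<open>auto intro!: has_vector_derivative_real_field\<close>)
  then show ?thesis by (simp add: Fc_def)
qed

lemma higher_pderiv_reflect:
  fixes q :: "complex poly"
  shows "(pderiv^^j) (pcompose q [:1,-1:]) = smult ((-1)^j) (pcompose ((pderiv^^j) q) [:1,-1:])"
proof (induction j)
  case 0 then show ?case by simp
next
  case (Suc j)
  have "pderiv [:1::complex,-1:] = [:-1:]" by (simp add: pderiv_pCons)
  then show ?case using Suc.IH by (simp add: pderiv_smult pderiv_pcompose)
qed

lemma poly_higher_pderiv_0:
  fixes q :: "complex poly"
  shows "poly ((pderiv^^j) q) 0 = fact j * coeff q j"
  by (simp add: poly_0_coeff_0 coeff_higher_pderiv pochhammer_fact)

lemma poly_higher_pderiv_1: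
  fixes q :: "complex poly"
  shows "poly ((pderiv^^j) q) 1 = (-1)^j * fact j * coeff (pcompose q [:1,-1:]) j"
proof -
  have "poly ((pderiv^^j) (pcompose q [:1,-1:])) 0 = (-1)^j * poly ((pderiv^^j) q) 1"
    by (simp add: higher_pderiv_reflect poly_pcompose)
  then have "(-1)^j * (fact j * coeff (pcompose q [:1,-1:]) j) = ((-1)^j * (-1)^j) * poly ((pderiv^^j) q) 1"
    by (simp add: poly_higher_pderiv_0 mult.assoc)
  moreover have "(-1::complex)^j * (-1)^j = 1" by (simp flip: power_add)
  ultimately show ?thesis by (simp add: mult.assoc)
qed

lemma G0_calc:
  fixes z :: complex and c :: "nat \<Rightarrow> complex"
  assumes "n \<ge> 1"
  shows "(\<Sum>j<2*n. z^(2*n-1-j) * (fact j * (\<Sum>i\<le>n. if n-1+i = j then c i else 0)))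
       = (\<Sum>i\<le>n. z^(n-i) * fact (n-1+i) * c i)"
proof -
  have "(\<Sum>j<2*n. z^(2*n-1-j) * (fact j * (\<Sum>i\<le>n. if n-1+i = j then c i else 0)))
     = (\<Sum>j<2*n. \<Sum>i\<le>n. if j = n-1+i then z^(2*n-1-j) * fact j * c i else 0)"
    by (simp add: sum_distrib_left if_distrib mult.assoc eq_commute cong: if_cong)
  also have "\<dots> = (\<Sum>i\<le>n. \<Sum>j<2*n. if j = n-1+i then z^(2*n-1-j) * fact j * c i else 0)"
    by (rule sum.swap)
  also have "\<dots> = (\<Sum>i\<le>n. z^(n-i) * fact (n-1+i) * c i)"
  proof (rule sum.cong)
    fix i assume "i \<in> {..n}"
    then have "n-1+i < 2*n" "2*n-1-(n-1+i) = n-i" using assms by auto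
    then show "(\<Sum>j<2*n. if j = n-1+i then z^(2*n-1-j) * fact j * c i else 0) = z^(n-i) * fact (n-1+i) * c i"
      by (simp add: sum.delta)
  qed simp
  finally show ?thesis .
qed

lemma G1_calc:
  fixes z :: complex and d :: "nat \<Rightarrow> complex"
  assumes "n \<ge> 1"
  shows "(\<Sum>j<2*n. z^(2*n-1-j) * ((-1)^j * fact j * (\<Sum>i\<le>n-1. if n+i = j then d i else 0)))
       = (\<Sum>i\<le>n-1. z^(n-1-i) * (-1)^(n+i) * fact (n+i) * d i)"
proof -
  have "(\<Sum>j<2*n. z^(2*n-1-j) * ((-1)^j * fact j * (\<Sum>i\<le>n-1. if n+i = j then d i else 0)))
     = (\<Sum>j<2*n. \<Sum>i\<le>n-1. if j = n+i then z^(2*n-1-j) * (-1)^j * fact j * d i else 0)"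
    by (simp add: sum_distrib_left if_distrib mult.assoc eq_commute cong: if_cong)
  also have "\<dots> = (\<Sum>i\<le>n-1. \<Sum>j<2*n. if j = n+i then z^(2*n-1-j) * (-1)^j * fact j * d i else 0)"
    by (rule sum.swap)
  also have "\<dots> = (\<Sum>i\<le>n-1. z^(n-1-i) * (-1)^(n+i) * fact (n+i) * d i)"
  proof (rule sum.cong)
    fix i assume "i \<in> {..n-1}"
    then have "n+i < 2*n" "2*n-1-(n+i) = n-1-i" using assms by auto
    then show "(\<Sum>j<2*n. if j = n+i then z^(2*n-1-j) * (-1)^j * fact j * d i else 0) = z^(n-1-i) * (-1)^(n+i) * fact (n+i) * d i"
      by (simp add: sum.delta)
  qed simp
  finally show ?thesis .
qed

lemma nat_id0:
  assumes "k < n"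
  shows "fact (2*n-1-k) * (n choose k) * fact k = fact (n-1) * fact n * ((2*n-1-k) choose (n-1))"
proof -
  have a: "fact k * fact (n-k) * (n choose k) = fact n" using assms binomial_fact_lemma by auto
  have b: "fact (n-1) * fact (2*n-1-k - (n-1)) * ((2*n-1-k) choose (n-1)) = fact (2*n-1-k)"
    using assms by (intro binomial_fact_lemma) auto
  have c: "2*n-1-k - (n-1) = n - k" using assms by auto
  have "fact (n-k) * (fact (2*n-1-k) * (n choose k) * fact k) = fact (2*n-1-k) * (fact k * fact (n-k) * (n choose k))"
    by (simp only: mult_ac)
  also have "\<dots> = fact (2*n-1-k) * fact n" by (simp only: a)
  also have "\<dots> = fact n * (fact (n-1) * fact (2*n-1-k - (n-1)) * ((2*n-1-k) choose (n-1)))" by (subst b) (simp only: mult_ac)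
  also have "\<dots> = fact (n-k) * (fact (n-1) * fact n * ((2*n-1-k) choose (n-1)))" by (subst c) (simp only: mult_ac)
  finally have "fact (n-k) * (fact (2*n-1-k) * (n choose k) * fact k) = fact (n-k) * (fact (n-1) * fact n * ((2*n-1-k) choose (n-1)))" .
  then show ?thesis by simp
qed

lemma nat_id1:
  assumes "k < n"
  shows "fact (2*n-1-k) * ((n-1) choose k) * fact k * fact (n-1-k) = fact (n-1) * fact (2*n-1-k)"
proof -
  have a: "fact k * fact (n-1-k) * ((n-1) choose k) = fact (n-1)" using assms by (intro binomial_fact_lemma) auto
  have "fact (2*n-1-k) * ((n-1) choose k) * fact k * fact (n-1-k) = fact (2*n-1-k) * (fact k * fact (n-1-k) * ((n-1) choose k))"
    by (simp only: mult_ac)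
  also have "\<dots> = fact (2*n-1-k) * fact (n-1)" by (simp only: a)
  finally show ?thesis by (simp only: mult_ac)
qed

lemma E0:
  fixes z :: complex
  assumes "n \<ge> 1"
  shows "(\<Sum>i\<le>n. z^(n-i) * fact (n-1+i) * ((-1)^i * of_nat (n choose i)))
       = fact (n-1) * (z^n + (\<Sum>k<n. b_coef n k * z^k))"
proof -
  have "(\<Sum>i\<le>n. z^(n-i) * fact (n-1+i) * ((-1)^i * of_nat (n choose i)))
     = (\<Sum>i\<in>{0..n}. z^(n-i) * fact (n-1+i) * ((-1)^i * of_nat (n choose i)))"
    by (simp add: atLeast0AtMost)
  also have "\<dots> = (\<Sum>k\<in>{0..n}. z^k * fact (2*n-1-k) * ((-1)^(n-k) * of_nat (n choose k)))"
    by (subst sum.atLeastAtMost_rev) (rule sum.cong, auto simp: binomial_symmetric[symmetric] intro!: arg_cong[where f=fact])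
  also have "\<dots> = (\<Sum>k<n. z^k * fact (2*n-1-k) * ((-1)^(n-k) * of_nat (n choose k))) + fact (n-1) * z^n"
    by (simp add: atLeast0AtMost lessThan_Suc_atMost[symmetric] mult_2)
  also have "(\<Sum>k<n. z^k * fact (2*n-1-k) * ((-1)^(n-k) * of_nat (n choose k))) = fact (n-1) * (\<Sum>k<n. b_coef n k * z^k)"
    unfolding sum_distrib_left
  proof (rule sum.cong)
    fix k assume "k \<in> {..<n}"
    then have "k < n" by simp
    from nat_id0[OF this] have "(of_nat (fact (2*n-1-k) * (n choose k) * fact k) :: complex) = of_nat (fact (n-1) * fact n * ((2*n-1-k) choose (n-1)))"
      by (simp only:)
    then have e: "(fact (2*n-1-k) * of_nat (n choose k) * fact k :: complex) = fact (n-1) * fact n * of_nat ((2*n-1-k) choose (n-1))"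
      by simp
    have h: "fact (2*n-1-k) * of_nat (n choose k) = (fact (n-1) * (fact n / fact k) * of_nat ((2*n-1-k) choose (n-1)) :: complex)"
      using e by (simp add: field_simps)
    have "z^k * fact (2*n-1-k) * ((-1)^(n-k) * of_nat (n choose k)) = z^k * (-1)^(n-k) * (fact (2*n-1-k) * of_nat (n choose k))"
      by (simp only: mult_ac)
    also have "\<dots> = z^k * (-1)^(n-k) * (fact (n-1) * (fact n / fact k) * of_nat ((2*n-1-k) choose (n-1)))"
      by (simp only: h)
    also have "\<dots> = fact (n-1) * (b_coef n k * z^k)"
      unfolding b_coef_def by (simp add: mult_ac)
    finally show "z^k * fact (2*n-1-k) * ((-1)^(n-k) * of_nat (n choose k)) = fact (n-1) * (b_coef n k * z^k)" .
  qed simp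
  finally show ?thesis by (simp add: algebra_simps)
qed

lemma E1:
  fixes z :: complex
  assumes "n \<ge> 1"
  shows "(\<Sum>i\<le>n-1. z^(n-1-i) * (-1)^(n+i) * fact (n+i) * ((-1)^i * of_nat ((n-1) choose i)))
       = - fact (n-1) * (\<Sum>k<n. beta_coef n k * z^k)"
proof -
  have "(\<Sum>i\<le>n-1. z^(n-1-i) * (-1)^(n+i) * fact (n+i) * ((-1)^i * of_nat ((n-1) choose i)))
     = (\<Sum>i\<in>{0..n-1}. z^(n-1-i) * (-1)^n * fact (n+i) * of_nat ((n-1) choose i))"
    by (simp add: atLeast0AtMost power_add mult_ac flip: power_mult_distrib)
  also have "\<dots> = (\<Sum>k\<in>{0..n-1}. z^k * (-1)^n * fact (2*n-1-k) * of_nat ((n-1) choose k))"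
  proof (subst sum.atLeastAtMost_rev, rule sum.cong)
    fix x assume "x \<in> {0..n-1}"
    then have x: "x \<le> n-1" by simp
    have h1: "n-1-(n-1+0-x) = x" "n+(n-1+0-x) = 2*n-1-x" using x assms by auto
    have h3: "((n-1) choose (n-1+0-x)) = ((n-1) choose x)" using x binomial_symmetric[of x "n-1"] by simp
    show "z^(n-1-(n-1+0-x)) * (-1)^n * fact (n+(n-1+0-x)) * of_nat ((n-1) choose (n-1+0-x)) = z^x * (-1)^n * fact (2*n-1-x) * of_nat ((n-1) choose x)"
      by (simp only: h1 h3)
  qed simp
  also have "\<dots> = (\<Sum>k<n. z^k * (-1)^n * fact (2*n-1-k) * of_nat ((n-1) choose k))"
    using assms by (simp add: atLeast0AtMost lessThan_Suc_atMost[symmetric])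
  also have "\<dots> = - fact (n-1) * (\<Sum>k<n. beta_coef n k * z^k)"
    unfolding sum_distrib_left
  proof (rule sum.cong)
    fix k assume "k \<in> {..<n}"
    then have "k < n" by simp
    from nat_id1[OF this] have "(of_nat (fact (2*n-1-k) * ((n-1) choose k) * fact k * fact (n-1-k)) :: complex) = of_nat (fact (n-1) * fact (2*n-1-k))"
      by (simp only:)
    then have e: "(fact (2*n-1-k) * of_nat ((n-1) choose k) * fact k * fact (n-1-k) :: complex) = fact (n-1) * fact (2*n-1-k)"
      by simp
    have h: "fact (2*n-1-k) * of_nat ((n-1) choose k) = (fact (n-1) * (fact (2*n-1-k) / (fact k * fact (n-1-k))) :: complex)"
      using e by (simp add: field_simps)
    have m: "(-1::complex)^n = - ((-1)^(n-1))" using assms by (cases n) auto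
    have "z^k * (-1)^n * fact (2*n-1-k) * of_nat ((n-1) choose k) = z^k * (-1)^n * (fact (2*n-1-k) * of_nat ((n-1) choose k))"
      by (simp only: mult_ac)
    also have "\<dots> = z^k * (-1)^n * (fact (n-1) * (fact (2*n-1-k) / (fact k * fact (n-1-k))))"
      by (simp only: h)
    also have "\<dots> = - fact (n-1) * (beta_coef n k * z^k)"
      unfolding beta_coef_def m by (simp add: mult_ac)
    finally show "z^k * (-1)^n * fact (2*n-1-k) * of_nat ((n-1) choose k) = - fact (n-1) * (beta_coef n k * z^k)" .
  qed simp
  finally show ?thesis .
qed

theorem lemma4p5:
  fixes n :: nat and z :: complex
  assumes "n \<ge> 1"
  shows "Delta_tilde n z = z ^ (2*n) / of_real (fact (n - 1)) *
    integral {0..1::real} (\<lambda>t. of_real (t ^ (n - 1) * (1 - t) ^ n) * exp (- z * of_real t))"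
proof -
  define c where "c = (\<lambda>i. (-1)^i * of_nat (n choose i) :: complex)"
  define d where "d = (\<lambda>i. (-1)^i * of_nat ((n-1) choose i) :: complex)"
  define p where "p = (\<Sum>i\<le>n. monom (c i) (n-1+i))"
  define r where "r = (\<Sum>i\<le>n-1. monom (d i) (n+i))"
  have poly_p: "poly p w = w^(n-1) * (1-w)^n" for w
  proof -
    have "poly p w = (\<Sum>i\<le>n. w^(n-1) * (of_nat (n choose i) * (-w)^i * 1^(n-i)))"
      unfolding p_def poly_sum poly_monom
    proof (rule sum.cong)
      fix i show "c i * w^(n-1+i) = w^(n-1) * (of_nat (n choose i) * (-w)^i * 1^(n-i))"
        unfolding c_def power_minus[of w i] power_add power_one by (simp only: mult_ac mult_1_right mult_1_left)
    qed simp
    also have "\<dots> = w^(n-1) * (\<Sum>i\<le>n. of_nat (n choose i) * (-w)^i * 1^(n-i))"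
      by (simp only: sum_distrib_left)
    also have "(\<Sum>i\<le>n. of_nat (n choose i) * (-w)^i * 1^(n-i)) = (1-w)^n"
      using binomial_ring[of "-w" "1::complex" n] by simp
    finally show ?thesis .
  qed
  have poly_r: "poly r w = w^n * (1-w)^(n-1)" for w
  proof -
    have "poly r w = (\<Sum>i\<le>n-1. w^n * (of_nat ((n-1) choose i) * (-w)^i * 1^(n-1-i)))"
      unfolding r_def poly_sum poly_monom
    proof (rule sum.cong)
      fix i show "d i * w^(n+i) = w^n * (of_nat ((n-1) choose i) * (-w)^i * 1^(n-1-i))"
        unfolding d_def power_minus[of w i] power_add power_one by (simp only: mult_ac mult_1_right mult_1_left)
    qed simp
    also have "\<dots> = w^n * (\<Sum>i\<le>n-1. of_nat ((n-1) choose i) * (-w)^i * 1^(n-1-i))"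
      by (simp only: sum_distrib_left)
    also have "(\<Sum>i\<le>n-1. of_nat ((n-1) choose i) * (-w)^i * 1^(n-1-i)) = (1-w)^(n-1)"
      using binomial_ring[of "-w" "1::complex" "n-1"] by simp
    finally show ?thesis .
  qed
  have comp: "pcompose p [:1,-1:] = r"
  proof (rule poly_ext)
    fix x :: complex
    have "poly (pcompose p [:1,-1:]) x = poly p (1 - x)" by (simp add: poly_pcompose)
    also have "\<dots> = poly r x" unfolding poly_p poly_r by (simp add: mult.commute)
    finally show "poly (pcompose p [:1,-1:]) x = poly r x" .
  qed
  have degp: "degree p < 2*n"
    unfolding p_def using assms
    by (intro degree_sum_less) (auto intro: le_less_trans[OF degree_monom_le])
  have coeff_p: "coeff p j = (\<Sum>i\<le>n. if n-1+i = j then c i else 0)" for j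
    by (simp add: p_def coeff_sum coeff_monom)
  have coeff_r: "coeff r j = (\<Sum>i\<le>n-1. if n+i = j then d i else 0)" for j
    by (simp add: r_def coeff_sum coeff_monom)
  define G where "G = (\<lambda>w. (\<Sum>j<2*n. z^(2*n-1-j) * poly ((pderiv^^j) p) w))"
  define f where "f = (\<lambda>t::real. of_real (t ^ (n - 1) * (1 - t) ^ n) * exp (- z * of_real t))"
  have f_eq: "f = (\<lambda>t. poly p (of_real t) * exp (- z * of_real t))"
    by (simp add: f_def poly_p fun_eq_iff)
  have hi: "((\<lambda>t. z^(2*n) * f t) has_integral (G 0 - exp (-z) * G 1)) {0..1}"
    unfolding f_eq G_def by (rule poly_exp_integral[OF degp])
  have "f integrable_on {0..1}"
    unfolding f_def by (intro integrable_continuous_interval continuous_intros)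
  then have "((\<lambda>t. z^(2*n) * f t) has_integral (z^(2*n) * integral {0..1} f)) {0..1}"
    by (intro has_integral_mult_right integrable_integral)
  with hi have I: "z^(2*n) * integral {0..1} f = G 0 - exp (-z) * G 1"
    using has_integral_unique by blast
  have G0: "G 0 = fact (n-1) * (z^n + (\<Sum>k<n. b_coef n k * z^k))"
  proof -
    have "G 0 = (\<Sum>j<2*n. z^(2*n-1-j) * (fact j * (\<Sum>i\<le>n. if n-1+i = j then c i else 0)))"
      by (simp add: G_def poly_higher_pderiv_0 coeff_p)
    also have "\<dots> = (\<Sum>i\<le>n. z^(n-i) * fact (n-1+i) * c i)" by (rule G0_calc[OF assms])
    also have "\<dots> = fact (n-1) * (z^n + (\<Sum>k<n. b_coef n k * z^k))"
      unfolding c_def by (rule E0[OF assms])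
    finally show ?thesis .
  qed
  have G1: "G 1 = - fact (n-1) * (\<Sum>k<n. beta_coef n k * z^k)"
  proof -
    have "G 1 = (\<Sum>j<2*n. z^(2*n-1-j) * ((-1)^j * fact j * (\<Sum>i\<le>n-1. if n+i = j then d i else 0)))"
      by (simp add: G_def poly_higher_pderiv_1 comp coeff_r)
    also have "\<dots> = (\<Sum>i\<le>n-1. z^(n-1-i) * (-1)^(n+i) * fact (n+i) * d i)" by (rule G1_calc[OF assms])
    also have "\<dots> = - fact (n-1) * (\<Sum>k<n. beta_coef n k * z^k)"
      unfolding d_def by (rule E1[OF assms])
    finally show ?thesis .
  qed
  have nz: "(fact (n-1) :: complex) \<noteq> 0" by simp
  have "z ^ (2*n) / of_real (fact (n - 1)) * integral {0..1::real} f = (G 0 - exp (-z) * G 1) / fact (n-1)"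
    using I by (simp add: field_simps)
  also have "\<dots> = Delta_tilde n z"
    unfolding G0 G1 Delta_tilde_def using nz by (simp add: field_simps)
  finally show ?thesis unfolding f_def by simp
qed

end
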